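(* Let $f:\mathbb{R}^n\to\mathbb{R}$ be convex and continuously differentiable with locally Lipschitz gradient, with $\mathcal{X}^*:=\arg\min f\neq\emptyset$ and optimal value $f^*$. Fix $x^0\in\mathbb{R}^n$, $\alpha_0>0$, $\theta_0>0$, $\tau\ge1$, $0<\omega\le\frac1{\sqrt2}$, and $\gamma_k$ with $0<\gamma_{\min}\le\gamma_k\le\gamma_{\max}$, and generate $x^{k+1}=x^k-\alpha_k\gamma_k\nabla f(x^k)$ with, for $k\ge1$, $L_k:=\frac{\|\nabla f(x^k)-\nabla f(x^{k-1})\|}{\|x^k-x^{k-1}\|}$, $\alpha_k:=\min\{\frac{\alpha_{k-1}\gamma_{k-1}}{\gamma_k}\sqrt{2(1-\omega^2)+\theta_{k-1}/\tau},\frac{\omega}{\gamma_kL_k}\}$, $\theta_k:=\frac{\alpha_k\gamma_k}{\alpha_{k-1}\gamma_{k-1}}$. Let $\eta:=\mathrm{dist}^2(x^0;\mathcal{X}^* )+2\alpha_0^2\gamma_0^2\|\nabla f(x^0)\|^2+2\alpha_0\gamma_0\theta_0(f(x^0)-f^* )$ and let $R>\sqrt\eta+\mathrm{dist}(x^0;\mathcal{X}^* )+\|x^0\|$. Then: (a) $x^k\in B(0;R)$ (open ball) for all $k$; in particular $(x^k)$ is bounded; (b) $\sum_{k\ge0}\|\nabla f(x^k)\|^2<\infty$ and $\lim_{k\to\infty}\|\nabla f(x^k)\|=0$; (c) $(x^k)$ converges to an optimal solution $x^*\in B(0;R)$.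
   Context: This is the adaptive scaled gradient algorithm (AdaSGA). $\mathrm{dist}(x;S)=\inf_{z\in S}\|z-x\|$. *)

theory Defs
  imports "HOL-Analysis.Analysis"
begin

definition argmin_set :: "('a \<Rightarrow> real) \<Rightarrow> 'a set" where
  "argmin_set f = {x. \<forall>y. f x \<le> f y}"

definition locally_lipschitz :: "('a::metric_space \<Rightarrow> 'b::metric_space) \<Rightarrow> bool" where
  "locally_lipschitz g \<longleftrightarrow>
     (\<forall>x. \<exists>e>0. \<exists>L. \<forall>y\<in>ball x e. \<forall>z\<in>ball x e. dist (g y) (g z) \<le> L * dist y z)"

end

theory Submission
  imports Defs
begin

lemma norm_diff_squared:
  fixes a b :: "'a::real_inner"
  shows "(norm (a - b))\<^sup>2 = (norm a)\<^sup>2 - 2 * (a \<bullet> b) + (norm b)\<^sup>2"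
  using dot_norm_neg[of a b] by simp

lemma line_deriv:
  fixes f :: "'a::real_inner \<Rightarrow> real"
  assumes grad: "\<And>y. (f has_derivative (\<lambda>h. g y \<bullet> h)) (at y)"
  shows "((\<lambda>s. f (a + s *\<^sub>R d)) has_field_derivative (g (a + s *\<^sub>R d) \<bullet> d)) (at s)"
proof -
  have l: "((\<lambda>s. a + s *\<^sub>R d) has_derivative (\<lambda>h. h *\<^sub>R d)) (at s)"
    by (auto intro!: derivative_eq_intros)
  have "((\<lambda>s. f (a + s *\<^sub>R d)) has_derivative (\<lambda>h. g (a + s *\<^sub>R d) \<bullet> (h *\<^sub>R d))) (at s)"
    using has_derivative_compose[OF l grad] by (simp add: o_def)
  then show ?thesis
    by (rule has_derivative_imp_has_field_derivative) (simp add: inner_scaleR_right)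
qed

lemma descent:
  fixes f :: "'a::real_inner \<Rightarrow> real"
  assumes grad: "\<And>y. (f has_derivative (\<lambda>h. g y \<bullet> h)) (at y)"
    and lip: "\<And>s. 0 \<le> s \<Longrightarrow> s \<le> 1 \<Longrightarrow> norm (g (a + s *\<^sub>R d) - g a) \<le> K * (s * norm d)"
  shows "f (a + d) \<le> f a + g a \<bullet> d + K / 2 * (norm d)\<^sup>2"
proof -
  define \<psi> where "\<psi> s = f (a + s *\<^sub>R d) - s * (g a \<bullet> d) - K / 2 * s\<^sup>2 * (norm d)\<^sup>2" for s
  have "\<psi> 1 \<le> \<psi> 0"
  proof (rule DERIV_nonpos_imp_nonincreasing[of 0 1 \<psi>])
    fix s :: real assume s: "0 \<le> s" "s \<le> 1"
    have D: "(\<psi> has_field_derivative (g (a + s *\<^sub>R d) \<bullet> d - g a \<bullet> d - K / 2 * (2 * s) * (norm d)\<^sup>2)) (at s)"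
      unfolding \<psi>_def
      by (auto intro!: derivative_eq_intros line_deriv[OF grad])
    have "g (a + s *\<^sub>R d) \<bullet> d - g a \<bullet> d = (g (a + s *\<^sub>R d) - g a) \<bullet> d"
      by (simp add: inner_diff_left)
    also have "\<dots> \<le> norm (g (a + s *\<^sub>R d) - g a) * norm d"
      by (rule norm_cauchy_schwarz)
    also have "\<dots> \<le> K * (s * norm d) * norm d"
      by (rule mult_right_mono[OF lip[OF s]]) simp
    finally have "g (a + s *\<^sub>R d) \<bullet> d - g a \<bullet> d - K / 2 * (2 * s) * (norm d)\<^sup>2 \<le> 0"
      by (simp add: power2_eq_square algebra_simps)
    then show "\<exists>y. DERIV \<psi> s :> y \<and> y \<le> 0" using D by blast
  qed simp
  then show ?thesis unfolding \<psi>_def by simp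
qed

lemma tangent:
  fixes f :: "'a::real_inner \<Rightarrow> real"
  assumes convex: "convex_on UNIV f"
    and grad: "\<And>y. (f has_derivative (\<lambda>h. g y \<bullet> h)) (at y)"
  shows "f z + g z \<bullet> (y - z) \<le> f y"
proof -
  define h where "h s = f (z + s *\<^sub>R (y - z))" for s
  have cv: "convex_on UNIV h"
  proof (rule convex_onI)
    fix t u v :: real assume t0: "0 < t" and t1: "t < 1"
    have t: "0 \<le> t" "t \<le> 1" using t0 t1 by auto
    have "z + ((1 - t) *\<^sub>R u + t *\<^sub>R v) *\<^sub>R (y - z) = (1 - t) *\<^sub>R (z + u *\<^sub>R (y - z)) + t *\<^sub>R (z + v *\<^sub>R (y - z))"
      by (simp add: algebra_simps)
    then show "h ((1 - t) *\<^sub>R u + t *\<^sub>R v) \<le> (1 - t) * h u + t * h v"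
      unfolding h_def using convex_onD[OF convex t] by simp
  qed simp
  have D: "(h has_field_derivative (g z \<bullet> (y - z))) (at 0 within UNIV)"
    unfolding h_def using line_deriv[OF grad, of z "y - z" 0] by simp
  have "h 1 - h 0 \<ge> (g z \<bullet> (y - z)) * (1 - 0)"
    by (rule convex_on_imp_above_tangent[OF cv]) (use D in auto)
  then show ?thesis unfolding h_def by simp
qed


locale ada =
  fixes f :: "'a::euclidean_space \<Rightarrow> real"
    and g :: "'a \<Rightarrow> 'a"
    and x :: "nat \<Rightarrow> 'a"
    and \<alpha> \<theta> \<gamma> L :: "nat \<Rightarrow> real"
    and \<tau> \<omega> \<gamma>min \<gamma>max R :: real
  assumes convex: "convex_on UNIV f"
    and grad: "\<And>y. (f has_derivative (\<lambda>h. g y \<bullet> h)) (at y)"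
    and grad_cont: "continuous_on UNIV g"
    and grad_lip: "locally_lipschitz g"
    and nonempty: "argmin_set f \<noteq> {}"
    and alpha0: "\<alpha> 0 > 0"
    and theta0: "\<theta> 0 > 0"
    and tau: "\<tau> \<ge> 1"
    and omega: "0 < \<omega>" "\<omega> \<le> 1 / sqrt 2"
    and gamma_bounds: "0 < \<gamma>min" "\<And>k. \<gamma>min \<le> \<gamma> k" "\<And>k. \<gamma> k \<le> \<gamma>max"
    and x_step: "\<And>k. x (Suc k) = x k - (\<alpha> k * \<gamma> k) *\<^sub>R g (x k)"
    and L_def: "\<And>k. k \<ge> 1 \<Longrightarrow>
        L k = norm (g (x k) - g (x (k - 1))) / norm (x k - x (k - 1))"
    and alpha_def: "\<And>k. k \<ge> 1 \<Longrightarrow>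
        \<alpha> k = (if L k = 0
                 then \<alpha> (k - 1) * \<gamma> (k - 1) / \<gamma> k * sqrt (2 * (1 - \<omega>\<^sup>2) + \<theta> (k - 1) / \<tau>)
                 else min (\<alpha> (k - 1) * \<gamma> (k - 1) / \<gamma> k * sqrt (2 * (1 - \<omega>\<^sup>2) + \<theta> (k - 1) / \<tau>))
                          (\<omega> / (\<gamma> k * L k)))"
    and theta_def: "\<And>k. k \<ge> 1 \<Longrightarrow> \<theta> k = \<alpha> k * \<gamma> k / (\<alpha> (k - 1) * \<gamma> (k - 1))"
    and R: "R > sqrt (infdist (x 0) (argmin_set f) ^ 2
                 + 2 * \<alpha> 0 ^ 2 * \<gamma> 0 ^ 2 * norm (g (x 0)) ^ 2
                 + 2 * \<alpha> 0 * \<gamma> 0 * \<theta> 0 * (f (x 0) - (INF y. f y)))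
             + infdist (x 0) (argmin_set f) + norm (x 0)"
begin

definition lam where "lam k = \<alpha> k * \<gamma> k"
definition cc where "cc = 1 - \<omega>\<^sup>2"
definition sq where "sq k = sqrt (2 * cc + \<theta> k / \<tau>)"

lemma gamma_pos: "\<gamma> k > 0"
  using gamma_bounds(1) gamma_bounds(2)[of k] by linarith

lemma omega_sq: "\<omega>\<^sup>2 \<le> 1/2"
proof -
  have "\<omega>\<^sup>2 \<le> (1 / sqrt 2)\<^sup>2" using omega by (intro power_mono) auto
  also have "\<dots> = 1/2" by (simp add: power_divide)
  finally show ?thesis .
qed

lemma cc_ge: "cc \<ge> 1/2" "cc > 0" "cc + \<omega>\<^sup>2 = 1"
  using omega_sq by (auto simp: cc_def)

lemma xs: "x (Suc k) = x k - lam k *\<^sub>R g (x k)"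
  using x_step[of k] by (simp add: lam_def)

lemma L_nonneg: "L (Suc k) \<ge> 0"
  using L_def[of "Suc k"] by simp

lemma lam_rec: "lam (Suc k) = (if L (Suc k) = 0 then lam k * sq k else min (lam k * sq k) (\<omega> / L (Suc k)))"
proof -
  have gp: "\<gamma> (Suc k) > 0" by (rule gamma_pos)
  have a: "\<alpha> (Suc k) = (if L (Suc k) = 0 then lam k / \<gamma> (Suc k) * sq k
     else min (lam k / \<gamma> (Suc k) * sq k) (\<omega> / (\<gamma> (Suc k) * L (Suc k))))"
    using alpha_def[of "Suc k"] by (simp add: lam_def sq_def cc_def)
  show ?thesis
  proof (cases "L (Suc k) = 0")
    case True then show ?thesis using a gp by (simp add: lam_def)
  next
    case False
    have "lam (Suc k) = min (lam k / \<gamma> (Suc k) * sq k) (\<omega> / (\<gamma> (Suc k) * L (Suc k))) * \<gamma> (Suc k)"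
      using a False by (simp add: lam_def)
    also have "\<dots> = min (lam k / \<gamma> (Suc k) * sq k * \<gamma> (Suc k)) (\<omega> / (\<gamma> (Suc k) * L (Suc k)) * \<gamma> (Suc k))"
      using gp by (simp add: min_mult_distrib_right)
    also have "\<dots> = min (lam k * sq k) (\<omega> / L (Suc k))"
      using gp by simp
    finally show ?thesis using False by simp
  qed
qed

lemma theta_eq: "\<theta> (Suc k) = lam (Suc k) / lam k"
  using theta_def[of "Suc k"] by (simp add: lam_def)

lemma pos: "lam k > 0 \<and> \<theta> k > 0"
proof (induction k)
  case 0 then show ?case using alpha0 theta0 gamma_pos[of 0] by (simp add: lam_def)
next
  case (Suc k)
  have "2 * cc + \<theta> k / \<tau> > 0" using cc_ge Suc tau by (simp add: add_pos_pos)
  then have sqp: "sq k > 0" by (simp add: sq_def)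
  have "lam (Suc k) > 0"
  proof (cases "L (Suc k) = 0")
    case True then show ?thesis using lam_rec[of k] Suc sqp by simp
  next
    case False
    then have "L (Suc k) > 0" using L_nonneg[of k] by simp
    then show ?thesis using lam_rec[of k] Suc sqp False omega by simp
  qed
  then show ?case using theta_eq[of k] Suc by simp
qed

lemma sq_ge1: "sq k \<ge> 1"
proof -
  have "1 \<le> 2 * cc + \<theta> k / \<tau>" using cc_ge pos[of k] tau by (simp add: add_increasing2)
  then show ?thesis by (simp add: sq_def)
qed

lemma lam_le: "lam (Suc k) \<le> lam k * sq k"
  using lam_rec[of k] by (auto simp: min_le_iff_disj)

lemma growth: "lam (Suc k) * \<theta> (Suc k) \<le> lam k * (2 * cc + \<theta> k)"
proof -
  have lp: "lam k > 0" "lam (Suc k) > 0" using pos by auto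
  have "lam (Suc k)^2 \<le> (lam k * sq k)^2" using lam_le[of k] lp by (intro power_mono) auto
  also have "\<dots> = lam k^2 * (2 * cc + \<theta> k / \<tau>)"
    using cc_ge pos[of k] tau by (simp add: sq_def power_mult_distrib add_nonneg_nonneg)
  also have "\<dots> \<le> lam k^2 * (2 * cc + \<theta> k)"
    using pos[of k] tau by (intro mult_left_mono) (auto simp: divide_le_eq)
  finally have "lam (Suc k)^2 \<le> lam k^2 * (2 * cc + \<theta> k)" .
  then have "lam (Suc k)^2 / lam k \<le> lam k^2 * (2 * cc + \<theta> k) / lam k"
    using lp by (intro divide_right_mono) auto
  then show ?thesis using lp by (simp add: theta_eq power2_eq_square)
qed

lemma lip_step: "lam (Suc k) * norm (g (x (Suc k)) - g (x k)) \<le> \<omega> * norm (x (Suc k) - x k)"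
proof (cases "x (Suc k) = x k")
  case True then show ?thesis by simp
next
  case False
  then have np: "norm (x (Suc k) - x k) > 0" by simp
  have Ld: "L (Suc k) = norm (g (x (Suc k)) - g (x k)) / norm (x (Suc k) - x k)"
    using L_def[of "Suc k"] by simp
  show ?thesis
  proof (cases "L (Suc k) = 0")
    case True
    then have "g (x (Suc k)) = g (x k)" using Ld np by simp
    then show ?thesis using omega by simp
  next
    case False
    then have Lp: "L (Suc k) > 0" using L_nonneg[of k] by simp
    have "lam (Suc k) \<le> \<omega> / L (Suc k)" using lam_rec[of k] False by simp
    then have "lam (Suc k) * L (Suc k) \<le> \<omega>" using Lp by (simp add: le_divide_eq)
    then have "lam (Suc k) * L (Suc k) * norm (x (Suc k) - x k) \<le> \<omega> * norm (x (Suc k) - x k)"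
      by (rule mult_right_mono) simp
    then show ?thesis using Ld np by simp
  qed
qed


definition fs where "fs = (INF y. f y)"
definition F where "F y = f y - fs"

lemma fs_eq: "z \<in> argmin_set f \<Longrightarrow> fs = f z"
  unfolding fs_def argmin_set_def by (rule cInf_eq_minimum) auto

lemma F_nonneg: "F y \<ge> 0"
proof -
  obtain z where z: "z \<in> argmin_set f" using nonempty by auto
  then show ?thesis using fs_eq[OF z] by (auto simp: F_def argmin_set_def)
qed

lemma tang: "f z + g z \<bullet> (y - z) \<le> f y"
  by (rule tangent[OF convex grad])

lemma grad_zero: "z \<in> argmin_set f \<Longrightarrow> g z = 0"
proof -
  assume z: "z \<in> argmin_set f"
  have "(\<lambda>h. g z \<bullet> h) = (\<lambda>h. 0)"
    by (rule has_derivative_local_min[OF grad]) (use z in \<open>auto simp: argmin_set_def\<close>)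
  then have "g z \<bullet> g z = 0" by metis
  then show ?thesis by simp
qed

definition W where
  "W z k = (norm (x (Suc k) - z))\<^sup>2 + \<omega>\<^sup>2 / cc * (norm (x (Suc k) - x k))\<^sup>2
     + lam (Suc k) * \<theta> (Suc k) / cc * F (x k)"

lemma W_ge: "W z k \<ge> (norm (x (Suc k) - z))\<^sup>2"
proof -
  have "0 \<le> \<omega>\<^sup>2 / cc * (norm (x (Suc k) - x k))\<^sup>2" using cc_ge by simp
  moreover have "0 \<le> lam (Suc k) * \<theta> (Suc k) / cc * F (x k)"
    using cc_ge pos[of "Suc k"] F_nonneg[of "x k"] by simp
  ultimately show ?thesis unfolding W_def by linarith
qed

lemma W_init:
  assumes z: "z \<in> argmin_set f"
  shows "W z 0 \<le> (norm (x 0 - z))\<^sup>2 + 2 * lam 0 ^ 2 * (norm (g (x 0)))\<^sup>2 + 2 * lam 0 * \<theta> 0 * F (x 0)"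
proof -
  define l where "l = lam 0"
  define G where "G = g (x 0) \<bullet> (x 0 - z)"
  define Q where "Q = (norm (x 1 - x 0))\<^sup>2"
  have lp: "l > 0" "\<theta> 0 > 0" using pos[of 0] by (auto simp: l_def)
  have x1: "x 1 = x 0 - l *\<^sub>R g (x 0)" using xs[of 0] by (simp add: l_def)
  have Qe: "Q = l^2 * (norm (g (x 0)))\<^sup>2" unfolding Q_def x1 by (simp add: power_mult_distrib)
  have e1: "(norm (x 1 - z))\<^sup>2 = (norm (x 0 - z))\<^sup>2 - 2 * l * G + Q"
  proof -
    have "x 1 - z = (x 0 - z) - l *\<^sub>R g (x 0)" using x1 by simp
    then have "(norm (x 1 - z))\<^sup>2 = (norm (x 0 - z))\<^sup>2 - 2 * ((x 0 - z) \<bullet> (l *\<^sub>R g (x 0))) + (norm (l *\<^sub>R g (x 0)))\<^sup>2"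
      by (simp only: norm_diff_squared)
    moreover have "(x 0 - z) \<bullet> (l *\<^sub>R g (x 0)) = l * G"
      unfolding G_def by (simp only: inner_scaleR_right inner_commute)
    ultimately have "(norm (x 1 - z))\<^sup>2 = (norm (x 0 - z))\<^sup>2 - 2 * (l * G) + (norm (l *\<^sub>R g (x 0)))\<^sup>2"
      by simp
    then show ?thesis unfolding Qe by (simp add: power_mult_distrib)
  qed
  have G: "G \<ge> F (x 0)" using tang[of "x 0" z] fs_eq[OF z] by (simp add: G_def F_def inner_diff_right)
  have X: "lam 1 * \<theta> 1 \<le> l * (2 * cc + \<theta> 0)" using growth[of 0] by (simp add: l_def)
  have F0: "F (x 0) \<ge> 0" by (rule F_nonneg)
  have "cc * W z 0 = cc * (norm (x 1 - z))\<^sup>2 + \<omega>\<^sup>2 * Q + lam 1 * \<theta> 1 * F (x 0)"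
    using cc_ge by (simp add: W_def Q_def field_simps)
  also have "\<dots> \<le> cc * ((norm (x 0 - z))\<^sup>2 - 2 * l * F (x 0) + Q) + \<omega>\<^sup>2 * Q + l * (2 * cc + \<theta> 0) * F (x 0)"
  proof -
    have "cc * (norm (x 1 - z))\<^sup>2 \<le> cc * ((norm (x 0 - z))\<^sup>2 - 2 * l * F (x 0) + Q)"
      using e1 G lp cc_ge by (intro mult_left_mono) auto
    moreover have "lam 1 * \<theta> 1 * F (x 0) \<le> l * (2 * cc + \<theta> 0) * F (x 0)"
      using X F0 by (rule mult_right_mono)
    ultimately show ?thesis by linarith
  qed
  also have "\<dots> = cc * (norm (x 0 - z))\<^sup>2 + (cc + \<omega>\<^sup>2) * Q + l * \<theta> 0 * F (x 0)"
    by (simp add: algebra_simps)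
  also have "\<dots> = cc * (norm (x 0 - z))\<^sup>2 + Q + l * \<theta> 0 * F (x 0)"
    using cc_ge(3) by simp
  also have "\<dots> \<le> cc * ((norm (x 0 - z))\<^sup>2 + 2 * Q + 2 * l * \<theta> 0 * F (x 0))"
  proof -
    have "Q \<ge> 0" by (simp add: Q_def)
    then have "1 * Q \<le> (cc * 2) * Q" using cc_ge(1) by (intro mult_right_mono) auto
    then have "Q \<le> cc * (2 * Q)" by simp
    moreover have "1 * (l * \<theta> 0 * F (x 0)) \<le> (cc * 2) * (l * \<theta> 0 * F (x 0))"
      using cc_ge(1) lp F0 by (intro mult_right_mono) auto
    then have "l * \<theta> 0 * F (x 0) \<le> cc * (2 * l * \<theta> 0 * F (x 0))" by (simp add: algebra_simps)
    ultimately show ?thesis by (simp add: algebra_simps)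
  qed
  finally have "W z 0 \<le> (norm (x 0 - z))\<^sup>2 + 2 * Q + 2 * l * \<theta> 0 * F (x 0)"
    using cc_ge(2) by simp
  then show ?thesis by (simp add: Qe l_def)
qed

lemma W_step:
  assumes z: "z \<in> argmin_set f"
    and GE: "g (x (Suc k)) \<bullet> (x (Suc k) - z) \<ge> F (x (Suc k)) + E"
  shows "W z (Suc k) + 2 * lam (Suc k) * E \<le> W z k"
proof -
  define n where "n = Suc k"
  define l where "l = lam n"
  define l' where "l' = lam k"
  define t where "t = \<theta> n"
  define p where "p = x k - x n"
  define q where "q = x n - x (Suc n)"
  define P where "P = (norm p)\<^sup>2"
  define Q where "Q = (norm q)\<^sup>2"
  define S where "S = q \<bullet> p"
  define G where "G = g (x n) \<bullet> (x n - z)"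
  define F0 where "F0 = F (x k)"
  define F1 where "F1 = F (x n)"
  define X where "X = lam (Suc n) * \<theta> (Suc n)"
  define D where "D = (norm (x n - z))\<^sup>2"
  define D' where "D' = (norm (x (Suc n) - z))\<^sup>2"
  have lp: "l > 0" "l' > 0" "t > 0" using pos unfolding l_def l'_def t_def by auto
  have tl: "t * l' = l" using lp unfolding t_def n_def theta_eq l_def l'_def by simp
  have qd: "q = l *\<^sub>R g (x n)" using xs[of n] by (simp add: q_def l_def)
  have pd: "p = l' *\<^sub>R g (x k)" using xs[of k] by (simp add: p_def l'_def n_def)
  have e1: "D' = D - 2 * l * G + Q"
  proof -
    have "x (Suc n) - z = (x n - z) - q" by (simp add: q_def)
    then have "D' = D - 2 * ((x n - z) \<bullet> q) + Q" unfolding D'_def D_def Q_def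
      by (simp only: norm_diff_squared)
    moreover have "(x n - z) \<bullet> q = l * G"
      unfolding G_def qd by (simp only: inner_scaleR_right inner_commute)
    ultimately show ?thesis by simp
  qed
  have e2: "Q - 2 * t * S + t^2 * P \<le> \<omega>^2 * P"
  proof -
    have "q - t *\<^sub>R p = l *\<^sub>R (g (x n) - g (x k))"
      unfolding qd pd using tl by (simp add: algebra_simps)
    then have "norm (q - t *\<^sub>R p) = l * norm (g (x (Suc k)) - g (x k))"
      using lp by (simp add: n_def)
    also have "\<dots> \<le> \<omega> * norm p"
      using lip_step[of k] by (simp add: l_def n_def p_def norm_minus_commute)
    finally have "(norm (q - t *\<^sub>R p))\<^sup>2 \<le> (\<omega> * norm p)\<^sup>2"
      by (intro power_mono) auto
    moreover have "(norm (q - t *\<^sub>R p))\<^sup>2 = Q - 2 * (q \<bullet> (t *\<^sub>R p)) + (norm (t *\<^sub>R p))\<^sup>2"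
      unfolding Q_def by (simp only: norm_diff_squared)
    moreover have "q \<bullet> (t *\<^sub>R p) = t * (q \<bullet> p)" by simp
    moreover have "(norm (t *\<^sub>R p))\<^sup>2 = t^2 * (norm p)\<^sup>2" using lp by (simp add: power_mult_distrib)
    ultimately show ?thesis unfolding P_def S_def by (simp add: mult.assoc power_mult_distrib)
  qed
  have e3: "S \<le> l * (F0 - F1)"
  proof -
    have "g (x n) \<bullet> p \<le> F0 - F1"
      using tang[of "x n" "x k"] by (simp add: p_def F0_def F1_def F_def inner_diff_right)
    then show ?thesis unfolding S_def qd using lp by (simp add: mult_left_mono)
  qed
  have e4: "l' * (F0 - F1) \<le> P"
  proof -
    have "f (x k) + g (x k) \<bullet> (x n - x k) \<le> f (x n)" by (rule tang)
    then have "F0 - F1 \<le> g (x k) \<bullet> p" by (simp add: p_def F0_def F1_def F_def inner_diff_right)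
    then have "l' * (F0 - F1) \<le> l' * (g (x k) \<bullet> p)" using lp by (simp add: mult_left_mono)
    also have "\<dots> = l'^2 * (g (x k) \<bullet> g (x k))" unfolding pd by (simp add: power2_eq_square)
    also have "\<dots> = P" unfolding P_def pd using lp by (simp add: power_mult_distrib power2_norm_eq_inner)
    finally show ?thesis .
  qed
  have e5: "X \<le> l * (2 * cc + t)" using growth[of n] by (simp add: X_def l_def t_def)
  have F1n: "F1 \<ge> 0" by (simp add: F1_def F_nonneg)
  have GE': "G \<ge> F1 + E" using GE by (simp add: G_def F1_def n_def)
  have d1: "2 * t * S \<le> 2 * t * (l * (F0 - F1))" using e3 lp by simp
  have d2: "t * l * (F0 - F1) \<le> t^2 * P"
  proof -
    have "t^2 * (l' * (F0 - F1)) \<le> t^2 * P" using e4 by (simp add: mult_left_mono)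
    moreover have "t^2 * (l' * (F0 - F1)) = t * l * (F0 - F1)" using tl by (simp add: power2_eq_square algebra_simps)
    ultimately show ?thesis by simp
  qed
  have Qb: "Q \<le> t * l * (F0 - F1) + \<omega>^2 * P"
    using e2 d1 d2 by (simp add: algebra_simps)
  have Xb: "X * F1 \<le> l * (2 * cc + t) * F1" using e5 F1n by (rule mult_right_mono)
  have Wn: "cc * W z n = cc * D' + \<omega>\<^sup>2 * Q + X * F1"
    using cc_ge by (simp add: W_def D'_def Q_def X_def F1_def q_def field_simps norm_minus_commute)
  have Wk: "cc * W z k = cc * D + \<omega>\<^sup>2 * P + l * t * F0"
    using cc_ge by (simp add: W_def D_def P_def l_def t_def F0_def p_def n_def field_simps norm_minus_commute)
  have "cc * (W z n + 2 * l * E) \<le> cc * W z k"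
  proof -
    have "cc * D' = cc * D - 2 * cc * l * G + cc * Q" unfolding e1 by (simp add: algebra_simps)
    moreover have "cc * l * G \<ge> cc * l * (F1 + E)" using GE' lp cc_ge by (simp add: mult_left_mono)
    moreover have "cc * (W z n + 2 * l * E) = cc * D' + \<omega>\<^sup>2 * Q + X * F1 + 2 * (cc * l * E)"
      using Wn by (simp add: algebra_simps)
    moreover have "cc * l * (F1 + E) = cc * l * F1 + cc * l * E" by (simp add: algebra_simps)
    moreover have "(cc + \<omega>^2) * Q = cc * Q + \<omega>^2 * Q" by (simp add: algebra_simps)
    ultimately have "cc * (W z n + 2 * l * E) \<le> cc * D - 2 * cc * l * F1 + (cc + \<omega>^2) * Q + X * F1"
      by linarith
    also have "\<dots> = cc * D - 2 * cc * l * F1 + Q + X * F1" using cc_ge(3) by simp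
    also have "\<dots> \<le> cc * D - 2 * cc * l * F1 + (t * l * (F0 - F1) + \<omega>^2 * P) + l * (2 * cc + t) * F1"
      using Qb Xb by linarith
    also have "\<dots> = cc * W z k" unfolding Wk by (simp add: algebra_simps)
    finally show ?thesis .
  qed
  then have "W z n + 2 * l * E \<le> W z k" using cc_ge(2) by simp
  then show ?thesis by (simp add: n_def l_def)
qed


lemma GE0: "z \<in> argmin_set f \<Longrightarrow> g y \<bullet> (y - z) \<ge> F y"
  using tang[of y z] fs_eq[of z] by (simp add: F_def inner_diff_right)

lemma W_mono: "z \<in> argmin_set f \<Longrightarrow> W z (Suc k) \<le> W z k"
  using W_step[of z k 0] GE0[of z "x (Suc k)"] by simp

lemma W_le0: "z \<in> argmin_set f \<Longrightarrow> W z k \<le> W z 0"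
  by (induction k) (auto intro: order_trans[OF W_mono])

lemma f_cont: "continuous_on UNIV f"
  by (rule continuous_at_imp_continuous_on) (auto intro: has_derivative_continuous[OF grad])

lemma argmin_closed: "closed (argmin_set f)"
proof -
  obtain z where z: "z \<in> argmin_set f" using nonempty by auto
  have "argmin_set f = {y. f y \<le> f z}"
    using z by (auto simp: argmin_set_def intro: order_trans)
  also have "closed \<dots>" by (rule closed_Collect_le[OF f_cont continuous_on_const])
  finally show ?thesis .
qed

definition xst where "xst = (SOME z. z \<in> argmin_set f \<and> infdist (x 0) (argmin_set f) = dist (x 0) z)"

lemma xst: "xst \<in> argmin_set f" "infdist (x 0) (argmin_set f) = dist (x 0) xst"
proof -
  obtain z where "z \<in> argmin_set f" "infdist (x 0) (argmin_set f) = dist (x 0) z"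
    using infdist_attains_inf[OF argmin_closed nonempty] by metis
  then have "\<exists>z. z \<in> argmin_set f \<and> infdist (x 0) (argmin_set f) = dist (x 0) z" by blast
  from someI_ex[OF this] show "xst \<in> argmin_set f" "infdist (x 0) (argmin_set f) = dist (x 0) xst"
    unfolding xst_def by auto
qed

definition eta where "eta = infdist (x 0) (argmin_set f) ^ 2
   + 2 * lam 0 ^ 2 * (norm (g (x 0)))\<^sup>2 + 2 * lam 0 * \<theta> 0 * F (x 0)"

definition BB where "BB = sqrt eta + infdist (x 0) (argmin_set f) + norm (x 0)"

lemma BB_R: "BB < R"
proof -
  have "eta = infdist (x 0) (argmin_set f) ^ 2
                 + 2 * \<alpha> 0 ^ 2 * \<gamma> 0 ^ 2 * norm (g (x 0)) ^ 2
                 + 2 * \<alpha> 0 * \<gamma> 0 * \<theta> 0 * (f (x 0) - (INF y. f y))"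
    by (simp add: eta_def lam_def F_def fs_def power_mult_distrib)
  then show ?thesis using R by (simp add: BB_def)
qed

lemma D_bound: "(norm (x k - xst))\<^sup>2 \<le> eta"
proof (cases k)
  case 0
  have "0 \<le> 2 * lam 0 ^ 2 * (norm (g (x 0)))\<^sup>2" by simp
  moreover have "0 \<le> 2 * lam 0 * \<theta> 0 * F (x 0)" using pos[of 0] F_nonneg[of "x 0"] by simp
  ultimately show ?thesis using 0 xst(2) by (simp add: eta_def dist_norm)
next
  case (Suc j)
  have "(norm (x k - xst))\<^sup>2 \<le> W xst j" using W_ge[where z=xst and k=j] Suc by simp
  also have "\<dots> \<le> W xst 0" by (rule W_le0[OF xst(1)])
  also have "\<dots> \<le> eta" using W_init[OF xst(1)] xst(2) by (simp add: eta_def dist_norm)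
  finally show ?thesis .
qed

lemma eta_nonneg: "eta \<ge> 0"
  using D_bound[of 0] by (rule order_trans[rotated]) simp

lemma xst_norm: "norm xst \<le> infdist (x 0) (argmin_set f) + norm (x 0)"
proof -
  have "norm xst \<le> norm (x 0) + norm (xst - x 0)" by (rule norm_triangle_sub)
  then show ?thesis using xst(2) by (simp add: dist_norm norm_minus_commute)
qed

lemma norm_bound: "norm (x k) \<le> BB"
proof -
  have "norm (x k - xst) \<le> sqrt eta" using D_bound[of k] by (rule real_le_rsqrt)
  moreover have "norm (x k) \<le> norm (x k - xst) + norm xst"
    using norm_triangle_ineq[of "x k - xst" xst] by simp
  ultimately show ?thesis using xst_norm by (simp add: BB_def)
qed

lemma in_ball: "x k \<in> ball 0 R"
  using norm_bound[of k] BB_R by simp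

lemma xst_lt: "norm xst < R"
proof -
  have "sqrt eta \<ge> 0" using eta_nonneg by simp
  then show ?thesis using xst_norm BB_R unfolding BB_def by linarith
qed


lemma lip_exists: "\<exists>K. K > 0 \<and> K-lipschitz_on (cball 0 (R + 1)) g \<and> (\<forall>y\<in>cball 0 R. norm (g y) \<le> K)"
proof -
  have ll: "local_lipschitz {0::real} (cball 0 (R + 1)) (\<lambda>_. g)"
  proof (rule local_lipschitzI)
    fix t :: real and y :: 'a
    obtain e L where e: "e > 0" and EL: "\<forall>u\<in>ball y e. \<forall>v\<in>ball y e. dist (g u) (g v) \<le> L * dist u v"
      using grad_lip unfolding locally_lipschitz_def by metis
    have "(max L 0)-lipschitz_on (cball y (e/2) \<inter> cball 0 (R + 1)) g"
    proof (rule lipschitz_onI)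
      fix u v assume "u \<in> cball y (e/2) \<inter> cball 0 (R + 1)" "v \<in> cball y (e/2) \<inter> cball 0 (R + 1)"
      then have "u \<in> ball y e" "v \<in> ball y e" using e by auto
      then have "dist (g u) (g v) \<le> L * dist u v" using EL by blast
      also have "\<dots> \<le> max L 0 * dist u v" by (intro mult_right_mono) auto
      finally show "dist (g u) (g v) \<le> max L 0 * dist u v" .
    qed simp
    then show "\<exists>u>0. \<exists>L. \<forall>t\<in>cball t u \<inter> {0}. L-lipschitz_on (cball y u \<inter> cball 0 (R + 1)) g"
      using e by (intro exI[of _ "e/2"]) auto
  qed
  have "\<exists>K0. K0-lipschitz_on (cball 0 (R + 1)) g"
    by (rule local_lipschitz_compact_implies_lipschitz[OF ll compact_cball]) auto
  then obtain K0 where K0: "K0-lipschitz_on (cball 0 (R + 1)) g" by blast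
  have "compact (g ` cball 0 R)"
    by (rule compact_continuous_image[OF continuous_on_subset[OF grad_cont] compact_cball]) simp
  then obtain M where M: "\<forall>y\<in>cball 0 R. norm (g y) \<le> M"
    using compact_imp_bounded bounded_iff by (metis imageI)
  define K where "K = max K0 (max M 1)"
  have "K-lipschitz_on (cball 0 (R + 1)) g"
    using K0 by (rule lipschitz_on_le) (auto simp: K_def)
  moreover have "\<forall>y\<in>cball 0 R. norm (g y) \<le> K" using M by (auto simp: K_def intro: le_max_iff_disj[THEN iffD2])
  ultimately show ?thesis by (intro exI[of _ K]) (auto simp: K_def)
qed

definition KK where "KK = (SOME K. K > 0 \<and> K-lipschitz_on (cball 0 (R + 1)) g \<and> (\<forall>y\<in>cball 0 R. norm (g y) \<le> K))"

lemma KK: "KK > 0" "KK-lipschitz_on (cball 0 (R + 1)) g" "\<And>y. y \<in> cball 0 R \<Longrightarrow> norm (g y) \<le> KK"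
  using someI_ex[OF lip_exists] unfolding KK_def[symmetric] by auto

lemma KK_lip: "u \<in> cball 0 (R + 1) \<Longrightarrow> v \<in> cball 0 (R + 1) \<Longrightarrow> norm (g u - g v) \<le> KK * norm (u - v)"
  using lipschitz_onD[OF KK(2)] by (simp add: dist_norm)

definition lmin where "lmin = min (lam 0) (\<omega> / KK)"

lemma lmin_pos: "lmin > 0"
  using pos[of 0] KK(1) omega by (simp add: lmin_def)

lemma lam_lower: "lam k \<ge> lmin"
proof (induction k)
  case 0 then show ?case by (simp add: lmin_def)
next
  case (Suc k)
  have lk: "lam k * sq k \<ge> lam k" using sq_ge1[of k] pos[of k] by (simp add: mult_le_cancel_left1)
  show ?case
  proof (cases "L (Suc k) = 0")
    case True then show ?thesis using lam_rec[of k] lk Suc by simp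
  next
    case False
    then have Lp: "L (Suc k) > 0" using L_nonneg[of k] by simp
    have Ld: "L (Suc k) = norm (g (x (Suc k)) - g (x k)) / norm (x (Suc k) - x k)"
      using L_def[of "Suc k"] by simp
    have nz: "norm (x (Suc k) - x k) > 0" using Lp Ld by (cases "x (Suc k) = x k") auto
    have "norm (g (x (Suc k)) - g (x k)) \<le> KK * norm (x (Suc k) - x k)"
      using in_ball[of k] in_ball[of "Suc k"] by (intro KK_lip) auto
    then have LK: "L (Suc k) \<le> KK" using Ld nz by (simp add: divide_le_eq)
    have "\<omega> / KK \<le> \<omega> / L (Suc k)" using LK Lp omega by (intro divide_left_mono) auto
    then have "lmin \<le> \<omega> / L (Suc k)" by (simp add: lmin_def)
    then show ?thesis using lam_rec[of k] False lk Suc by simp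
  qed
qed

lemma cocoercive: "g (x k) \<bullet> (x k - xst) \<ge> F (x k) + (norm (g (x k)))\<^sup>2 / (2 * KK)"
proof -
  define v where "v = g (x k)"
  define d where "d = (1 / KK) *\<^sub>R v"
  have nv: "norm v \<le> KK" using KK(3)[of "x k"] in_ball[of k] by (simp add: v_def)
  have nd: "norm d \<le> 1" using nv KK(1) by (simp add: d_def divide_le_eq)
  have gz: "g xst = 0" by (rule grad_zero[OF xst(1)])
  have lip: "norm (g (xst + s *\<^sub>R d) - g xst) \<le> KK * (s * norm d)" if s: "0 \<le> s" "s \<le> 1" for s
  proof -
    have "norm (xst + s *\<^sub>R d) \<le> norm xst + s * norm d"
      using norm_triangle_ineq[of xst "s *\<^sub>R d"] s by simp
    also have "\<dots> \<le> R + 1" using xst_lt nd s mult_le_one[of s "norm d"] by simp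
    finally have "xst + s *\<^sub>R d \<in> cball 0 (R + 1)" by simp
    moreover have "xst \<in> cball 0 (R + 1)" using xst_lt by simp
    ultimately show ?thesis using KK_lip[of "xst + s *\<^sub>R d" xst] s by simp
  qed
  have desc: "f (xst + d) \<le> f xst + g xst \<bullet> d + KK / 2 * (norm d)\<^sup>2"
    by (rule descent[OF grad lip])
  have tg: "f (x k) + g (x k) \<bullet> (xst + d - x k) \<le> f (xst + d)" by (rule tang)
  have vd: "v \<bullet> d = (norm v)\<^sup>2 / KK" by (simp add: d_def power2_norm_eq_inner)
  have nd2: "KK / 2 * (norm d)\<^sup>2 = (norm v)\<^sup>2 / (2 * KK)"
    using KK(1) by (simp add: d_def power_mult_distrib power2_eq_square field_simps)
  have "f (x k) + v \<bullet> (xst - x k) + (norm v)\<^sup>2 / KK \<le> fs + (norm v)\<^sup>2 / (2 * KK)"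
    using desc tg gz fs_eq[OF xst(1)] vd nd2 by (simp add: v_def inner_diff_right inner_add_right)
  moreover have "(norm v)\<^sup>2 / KK = 2 * ((norm v)\<^sup>2 / (2 * KK))" by simp
  ultimately show ?thesis by (simp add: F_def v_def inner_diff_right)
qed

lemma summable_g: "summable (\<lambda>k. (norm (g (x k)))\<^sup>2)"
proof -
  have step: "lmin * (norm (g (x (Suc k))))\<^sup>2 / KK \<le> W xst k - W xst (Suc k)" for k
  proof -
    have "W xst (Suc k) + 2 * lam (Suc k) * ((norm (g (x (Suc k))))\<^sup>2 / (2 * KK)) \<le> W xst k"
      by (rule W_step[OF xst(1) cocoercive])
    moreover have "lmin * (norm (g (x (Suc k))))\<^sup>2 / KK \<le> 2 * lam (Suc k) * ((norm (g (x (Suc k))))\<^sup>2 / (2 * KK))"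
      using lam_lower[of "Suc k"] KK(1) by (simp add: divide_right_mono mult_right_mono)
    ultimately show ?thesis by linarith
  qed
  have sum: "(\<Sum>i<n. lmin * (norm (g (x (Suc i))))\<^sup>2 / KK) \<le> W xst 0 - W xst n" for n
  proof (induction n)
    case (Suc n) then show ?case using step[of n] by simp
  qed simp
  have bnd: "(\<Sum>i<n. (norm (g (x (Suc i))))\<^sup>2) \<le> KK / lmin * W xst 0" for n
  proof -
    have W0: "W xst n \<ge> 0" using W_ge[where z=xst and k=n] by (rule order_trans[rotated]) simp
    have "(\<Sum>i<n. lmin * (norm (g (x (Suc i))))\<^sup>2 / KK) = lmin / KK * (\<Sum>i<n. (norm (g (x (Suc i))))\<^sup>2)"
      by (simp add: sum_distrib_left)
    then have "lmin / KK * (\<Sum>i<n. (norm (g (x (Suc i))))\<^sup>2) \<le> W xst 0"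
      using sum[of n] W0 by linarith
    then show ?thesis using lmin_pos KK(1) by (simp add: field_simps)
  qed
  have "summable (\<lambda>k. (norm (g (x (Suc k))))\<^sup>2)"
    by (rule summableI_nonneg_bounded[OF _ bnd]) simp
  then show ?thesis by (rule summable_Suc_iff[THEN iffD1])
qed

lemma g_to_0: "(\<lambda>k. norm (g (x k))) \<longlonglongrightarrow> 0"
proof -
  have "(\<lambda>k. (norm (g (x k)))\<^sup>2) \<longlonglongrightarrow> 0" by (rule summable_LIMSEQ_zero[OF summable_g])
  then have "(\<lambda>k. sqrt ((norm (g (x k)))\<^sup>2)) \<longlonglongrightarrow> sqrt 0" by (rule tendsto_real_sqrt)
  then show ?thesis by simp
qed


lemma bounded_x: "bounded (range x)"
  unfolding bounded_iff using norm_bound by blast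

lemma cluster_min:
  assumes r: "strict_mono r" and lim: "(x \<circ> r) \<longlonglongrightarrow> q"
  shows "q \<in> argmin_set f"
proof -
  have "(\<lambda>k. g (x k)) \<longlonglongrightarrow> 0" using g_to_0 by (simp add: tendsto_norm_zero_iff)
  then have a: "((\<lambda>k. g (x k)) \<circ> r) \<longlonglongrightarrow> 0" by (rule LIMSEQ_subseq_LIMSEQ[OF _ r])
  have "isCont g q" using grad_cont by (simp add: continuous_on_eq_continuous_at)
  then have b: "(\<lambda>n. g ((x \<circ> r) n)) \<longlonglongrightarrow> g q" by (rule isCont_tendsto_compose[OF _ lim])
  have "g q = 0" using LIMSEQ_unique[OF b] a by (simp add: o_def)
  then show ?thesis using tang[of q] by (simp add: argmin_set_def)
qed

lemma inner_conv:
  assumes z: "z \<in> argmin_set f" and w: "w \<in> argmin_set f"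
  shows "convergent (\<lambda>k. x k \<bullet> (w - z))"
proof -
  have W0: "\<And>u k. u \<in> argmin_set f \<Longrightarrow> W u k \<ge> 0"
    using W_ge by (metis order_trans zero_le_power2)
  obtain Lz where Lz: "(W z) \<longlonglongrightarrow> Lz"
    using decseq_convergent[of "W z" 0] W_mono[OF z] W0[OF z] by (metis decseq_SucI)
  obtain Lw where Lw: "(W w) \<longlonglongrightarrow> Lw"
    using decseq_convergent[of "W w" 0] W_mono[OF w] W0[OF w] by (metis decseq_SucI)
  have eq: "x (Suc k) \<bullet> (w - z) = (W z k - W w k - (norm z)\<^sup>2 + (norm w)\<^sup>2) / 2" for k
  proof -
    have "W z k - W w k = (norm (x (Suc k) - z))\<^sup>2 - (norm (x (Suc k) - w))\<^sup>2"
      by (simp add: W_def)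
    also have "\<dots> = 2 * (x (Suc k) \<bullet> (w - z)) + (norm z)\<^sup>2 - (norm w)\<^sup>2"
      by (simp add: norm_diff_squared inner_diff_right)
    finally show ?thesis by simp
  qed
  have "(\<lambda>k. (W z k - W w k - (norm z)\<^sup>2 + (norm w)\<^sup>2) / 2) \<longlonglongrightarrow> (Lz - Lw - (norm z)\<^sup>2 + (norm w)\<^sup>2) / 2"
    by (intro tendsto_intros Lz Lw) simp
  then have "(\<lambda>k. x (Suc k) \<bullet> (w - z)) \<longlonglongrightarrow> (Lz - Lw - (norm z)\<^sup>2 + (norm w)\<^sup>2) / 2"
    by (simp add: eq)
  then have "(\<lambda>k. x k \<bullet> (w - z)) \<longlonglongrightarrow> (Lz - Lw - (norm z)\<^sup>2 + (norm w)\<^sup>2) / 2"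
    by (rule LIMSEQ_imp_Suc)
  then show ?thesis by (auto simp: convergent_def)
qed

lemma x_conv: "\<exists>p\<in>argmin_set f. p \<in> ball 0 R \<and> x \<longlonglongrightarrow> p"
proof -
  obtain p r where r: "strict_mono r" and pl: "(x \<circ> r) \<longlonglongrightarrow> p"
    using bounded_imp_convergent_subsequence[OF bounded_x] by blast
  have pm: "p \<in> argmin_set f" by (rule cluster_min[OF r pl])
  have conv: "x \<longlonglongrightarrow> p"
  proof (rule ccontr)
    assume nc: "\<not> x \<longlonglongrightarrow> p"
    then obtain e where e: "e > 0" and ne: "\<not> eventually (\<lambda>n. dist (x n) p < e) sequentially"
      unfolding tendsto_iff by blast
    define S where "S = {n. dist (x n) p \<ge> e}"
    have "infinite S"
      unfolding infinite_nat_iff_unbounded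
    proof
      fix m
      from ne have "\<not> (\<forall>n\<ge>Suc m. dist (x n) p < e)" unfolding eventually_sequentially by blast
      then show "\<exists>n>m. n \<in> S" by (auto simp: S_def not_less Suc_le_eq)
    qed
    then obtain r2 :: "nat \<Rightarrow> nat" where r2: "strict_mono r2" "\<And>n. r2 n \<in> S"
      using infinite_enumerate by blast
    have "bounded (range (x \<circ> r2))" using bounded_x
      by (rule bounded_subset) auto
    then obtain q r3 where r3: "strict_mono r3" and ql: "((x \<circ> r2) \<circ> r3) \<longlonglongrightarrow> q"
      using bounded_imp_convergent_subsequence by blast
    have r23: "strict_mono (r2 \<circ> r3)" by (rule strict_mono_o[OF r2(1) r3])
    have ql': "(x \<circ> (r2 \<circ> r3)) \<longlonglongrightarrow> q" using ql by (simp add: o_assoc)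
    have qm: "q \<in> argmin_set f" by (rule cluster_min[OF r23 ql'])
    have "dist q p \<ge> e"
    proof (rule LIMSEQ_le_const)
      show "(\<lambda>n. dist ((x \<circ> (r2 \<circ> r3)) n) p) \<longlonglongrightarrow> dist q p" by (intro tendsto_intros ql')
      show "\<exists>N. \<forall>n\<ge>N. e \<le> dist ((x \<circ> (r2 \<circ> r3)) n) p" using r2(2) by (auto simp: S_def)
    qed
    then have qp: "q \<noteq> p" using e by auto
    obtain l where l: "(\<lambda>k. x k \<bullet> (q - p)) \<longlonglongrightarrow> l"
      using inner_conv[OF pm qm] by (auto simp: convergent_def)
    have l1: "((\<lambda>k. x k \<bullet> (q - p)) \<circ> r) \<longlonglongrightarrow> l" by (rule LIMSEQ_subseq_LIMSEQ[OF l r])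
    have l1': "((\<lambda>k. x k \<bullet> (q - p)) \<circ> r) \<longlonglongrightarrow> p \<bullet> (q - p)"
      using tendsto_inner[OF pl tendsto_const[of "q - p"]] by (simp add: o_def)
    have l2: "((\<lambda>k. x k \<bullet> (q - p)) \<circ> (r2 \<circ> r3)) \<longlonglongrightarrow> l" by (rule LIMSEQ_subseq_LIMSEQ[OF l r23])
    have l2': "((\<lambda>k. x k \<bullet> (q - p)) \<circ> (r2 \<circ> r3)) \<longlonglongrightarrow> q \<bullet> (q - p)"
      using tendsto_inner[OF ql' tendsto_const[of "q - p"]] by (simp add: o_def)
    have "p \<bullet> (q - p) = q \<bullet> (q - p)"
      using LIMSEQ_unique[OF l1 l1'] LIMSEQ_unique[OF l2 l2'] by simp
    then have "(q - p) \<bullet> (q - p) = 0" by (simp add: inner_diff_left)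
    then show False using qp by simp
  qed
  have "norm p \<le> BB"
    by (rule LIMSEQ_le_const2[OF tendsto_norm[OF conv]]) (use norm_bound in auto)
  then have "p \<in> ball 0 R" using BB_R by simp
  then show ?thesis using pm conv by blast
qed

lemma main: "(\<forall>k. x k \<in> ball 0 R) \<and> bounded (range x)
      \<and> summable (\<lambda>k. norm (g (x k)) ^ 2) \<and> (\<lambda>k. norm (g (x k))) \<longlonglongrightarrow> 0
      \<and> (\<exists>xs \<in> argmin_set f. xs \<in> ball 0 R \<and> x \<longlonglongrightarrow> xs)"
  using in_ball bounded_x summable_g g_to_0 x_conv by blast

end

theorem theorem4p3:
  fixes f :: "'a::euclidean_space \<Rightarrow> real"
    and g :: "'a \<Rightarrow> 'a"
    and x :: "nat \<Rightarrow> 'a"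
    and \<alpha> \<theta> \<gamma> L :: "nat \<Rightarrow> real"
    and \<tau> \<omega> \<gamma>min \<gamma>max R :: real
  assumes convex: "convex_on UNIV f"
    and grad: "\<And>y. (f has_derivative (\<lambda>h. g y \<bullet> h)) (at y)"
    and grad_cont: "continuous_on UNIV g"
    and grad_lip: "locally_lipschitz g"
    and nonempty: "argmin_set f \<noteq> {}"
    and alpha0: "\<alpha> 0 > 0"
    and theta0: "\<theta> 0 > 0"
    and tau: "\<tau> \<ge> 1"
    and omega: "0 < \<omega>" "\<omega> \<le> 1 / sqrt 2"
    and gamma_bounds: "0 < \<gamma>min" "\<And>k. \<gamma>min \<le> \<gamma> k" "\<And>k. \<gamma> k \<le> \<gamma>max"
    and x_step: "\<And>k. x (Suc k) = x k - (\<alpha> k * \<gamma> k) *\<^sub>R g (x k)"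
    and L_def: "\<And>k. k \<ge> 1 \<Longrightarrow>
        L k = norm (g (x k) - g (x (k - 1))) / norm (x k - x (k - 1))"
    and alpha_def: "\<And>k. k \<ge> 1 \<Longrightarrow>
        \<alpha> k = (if L k = 0
                 then \<alpha> (k - 1) * \<gamma> (k - 1) / \<gamma> k * sqrt (2 * (1 - \<omega>\<^sup>2) + \<theta> (k - 1) / \<tau>)
                 else min (\<alpha> (k - 1) * \<gamma> (k - 1) / \<gamma> k * sqrt (2 * (1 - \<omega>\<^sup>2) + \<theta> (k - 1) / \<tau>))
                          (\<omega> / (\<gamma> k * L k)))"
    and theta_def: "\<And>k. k \<ge> 1 \<Longrightarrow> \<theta> k = \<alpha> k * \<gamma> k / (\<alpha> (k - 1) * \<gamma> (k - 1))"
    and R: "R > sqrt (infdist (x 0) (argmin_set f) ^ 2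
                 + 2 * \<alpha> 0 ^ 2 * \<gamma> 0 ^ 2 * norm (g (x 0)) ^ 2
                 + 2 * \<alpha> 0 * \<gamma> 0 * \<theta> 0 * (f (x 0) - (INF y. f y)))
             + infdist (x 0) (argmin_set f) + norm (x 0)"
  shows "(\<forall>k. x k \<in> ball 0 R) \<and> bounded (range x)
      \<and> summable (\<lambda>k. norm (g (x k)) ^ 2) \<and> (\<lambda>k. norm (g (x k))) \<longlonglongrightarrow> 0
      \<and> (\<exists>xs \<in> argmin_set f. xs \<in> ball 0 R \<and> x \<longlonglongrightarrow> xs)"
proof -
  interpret ada f g x \<alpha> \<theta> \<gamma> L \<tau> \<omega> \<gamma>min \<gamma>max R
    by (rule ada.intro) (fact assms)+
  show ?thesis by (rule main)
qed

end
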